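(* Let $\beta=(\pi_1,\pi_2)$ be a chainable pair of patterns which is redundant, and let $\beta'=(\pi_1*\pi_2)$ be the single-pattern architecture. Then (1) $\mathcal{B}^\beta=\Sigma^{\pi_1*\pi_2}=\mathcal{B}^{\beta'}$; (2) $\|\beta'\|_0=\|\pi_1*\pi_2\|_0<\|\pi_1\|_0+\|\pi_2\|_0=\|\beta\|_0$.
   Context: A pattern is a tuple $\pi=(a,b,c,d)$ of positive integers; $\mathbf{S}_\pi:=\mathbf{I}_a\otimes\mathbf{1}_{b\times c}\otimes\mathbf{I}_d\in\{0,1\}^{abd\times acd}$; $\|\pi\|_0:=abcd$. A $\pi$-factor is a complex $abd\times acd$ matrix with support in that of $\mathbf{S}_\pi$; $\Sigma^\pi$ is the set of $\pi$-factors. Patterns $\pi_1=(a_1,b_1,c_1,d_1),\pi_2=(a_2,b_2,c_2,d_2)$ are chainable if $a_1c_1/a_2=b_2d_2/d_1=:r(\pi_1,\pi_2)$ is an integer, $a_1\mid a_2$, $d_2\mid d_1$; then $\pi_1*\pi_2:=(a_1,b_1d_1/d_2,a_2c_2/a_1,d_2)$. The chainable pair is redundant if $r(\pi_1,\pi_2)\ge\min(b_1,c_2)$. For an architecture $\alpha=(\pi_\ell)_{\ell=1}^L$, $\mathcal{B}^\alpha:=\{\mathbf{X}_1\cdots\mathbf{X}_L:\mathbf{X}_\ell\in\Sigma^{\pi_\ell}\}$ and $\|\alpha\|_0:=\sum_\ell\|\pi_\ell\|_0$. *)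

theory Defs
  imports Complex_Main "Jordan_Normal_Form.Matrix"
begin

type_synonym pattern = "nat \<times> nat \<times> nat \<times> nat"

definition pat_pos :: "pattern \<Rightarrow> bool" where
  "pat_pos \<pi> = (case \<pi> of (a,b,c,d) \<Rightarrow> 0 < a \<and> 0 < b \<and> 0 < c \<and> 0 < d)"

definition pat_rows :: "pattern \<Rightarrow> nat" where
  "pat_rows \<pi> = (case \<pi> of (a,b,c,d) \<Rightarrow> a*b*d)"

definition pat_cols :: "pattern \<Rightarrow> nat" where
  "pat_cols \<pi> = (case \<pi> of (a,b,c,d) \<Rightarrow> a*c*d)"

text \<open>Support matrix S_pi = I_a (x) 1_{b x c} (x) I_d, written out entrywise:
  row index i = i1*(b*d) + i2*d + i3 (i1<a, i2<b, i3<d),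
  column index j = j1*(c*d) + j2*d + j3 (j1<a, j2<c, j3<d);
  the entry is 1 iff i1 = j1 and i3 = j3.\<close>
definition supp_mat :: "pattern \<Rightarrow> complex mat" where
  "supp_mat \<pi> = (case \<pi> of (a,b,c,d) \<Rightarrow>
     mat (a*b*d) (a*c*d) (\<lambda>(i,j).
       if i div (b*d) = j div (c*d) \<and> i mod d = j mod d then 1 else 0))"

definition factors :: "pattern \<Rightarrow> complex mat set" where
  "factors \<pi> = {X \<in> carrier_mat (pat_rows \<pi>) (pat_cols \<pi>).
      \<forall>i < pat_rows \<pi>. \<forall>j < pat_cols \<pi>. supp_mat \<pi> $$ (i,j) = 0 \<longrightarrow> X $$ (i,j) = 0}"

definition pat_norm0 :: "pattern \<Rightarrow> nat" where
  "pat_norm0 \<pi> = (case \<pi> of (a,b,c,d) \<Rightarrow> a*b*c*d)"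

definition chainable :: "pattern \<Rightarrow> pattern \<Rightarrow> bool" where
  "chainable \<pi>1 \<pi>2 = (case \<pi>1 of (a1,b1,c1,d1) \<Rightarrow> case \<pi>2 of (a2,b2,c2,d2) \<Rightarrow>
     (real (a1*c1) / real a2 = real (b2*d2) / real d1 \<and> a2 dvd a1*c1)
     \<and> a1 dvd a2 \<and> d2 dvd d1)"

text \<open>r(pi1,pi2) = a1 c1 / a2 (an integer for chainable pairs).\<close>
definition chain_r :: "pattern \<Rightarrow> pattern \<Rightarrow> nat" where
  "chain_r \<pi>1 \<pi>2 = (case \<pi>1 of (a1,b1,c1,d1) \<Rightarrow> case \<pi>2 of (a2,b2,c2,d2) \<Rightarrow> a1*c1 div a2)"

definition pat_star :: "pattern \<Rightarrow> pattern \<Rightarrow> pattern" (infixl "\<star>" 70) where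
  "pat_star \<pi>1 \<pi>2 = (case \<pi>1 of (a1,b1,c1,d1) \<Rightarrow> case \<pi>2 of (a2,b2,c2,d2) \<Rightarrow>
     (a1, b1*d1 div d2, a2*c2 div a1, d2))"

definition redundant :: "pattern \<Rightarrow> pattern \<Rightarrow> bool" where
  "redundant \<pi>1 \<pi>2 = (chainable \<pi>1 \<pi>2 \<and>
     (case \<pi>1 of (a1,b1,c1,d1) \<Rightarrow> case \<pi>2 of (a2,b2,c2,d2) \<Rightarrow>
        chain_r \<pi>1 \<pi>2 \<ge> min b1 c2))"

fun arch_set :: "pattern list \<Rightarrow> complex mat set" where
  "arch_set [] = {}"
| "arch_set [\<pi>] = factors \<pi>"
| "arch_set (\<pi> # \<alpha>) = {X * Y | X Y. X \<in> factors \<pi> \<and> Y \<in> arch_set \<alpha>}"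

definition arch_norm0 :: "pattern list \<Rightarrow> nat" where
  "arch_norm0 \<alpha> = (\<Sum>\<pi>\<leftarrow>\<alpha>. pat_norm0 \<pi>)"

end

theory Submission
  imports Defs
begin

lemma mult_entry:
  assumes "A \<in> carrier_mat n m" "B \<in> carrier_mat m l" "i < n" "j < l"
  shows "(A * B) $$ (i,j) = (\<Sum>k<m. A $$ (i,k) * B $$ (k,j))"
  using assms by (auto simp: scalar_prod_def lessThan_atLeast0 intro!: sum.cong)

definition sp :: "nat \<Rightarrow> nat \<Rightarrow> nat \<Rightarrow> nat \<Rightarrow> nat \<Rightarrow> bool" where
  "sp b c d i j = (i div (b*d) = j div (c*d) \<and> i mod d = j mod d)"

lemma factors_iff:
  "factors (a,b,c,d) = {X \<in> carrier_mat (a*b*d) (a*c*d).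
      \<forall>i < a*b*d. \<forall>j < a*c*d. \<not> sp b c d i j \<longrightarrow> X $$ (i,j) = 0}"
  unfolding factors_def supp_mat_def pat_rows_def pat_cols_def sp_def by auto

lemma dig:
  assumes "y < (r::nat)" "z < m"
  shows "((x*r+y)*m+z) div (r*m) = x" "((x*r+y)*m+z) div m mod r = y" "((x*r+y)*m+z) mod m = z"
proof -
  have m: "((x*r+y)*m+z) div m = x*r+y" using assms by simp
  show "((x*r+y)*m+z) div m mod r = y" using m assms by simp
  show "((x*r+y)*m+z) mod m = z" using assms by simp
  have "((x*r+y)*m+z) div (r*m) = ((x*r+y)*m+z) div m div r" by (metis div_mult2_eq mult.commute)
  then show "((x*r+y)*m+z) div (r*m) = x" using m assms by simp
qed

lemma recon: "(k::nat) = (k div (r*m)*r + k div m mod r)*m + k mod m"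
proof -
  have "k div (r*m) = k div m div r" by (metis div_mult2_eq mult.commute)
  then show ?thesis by simp
qed

lemma lt2: "(x::nat) < n \<Longrightarrow> y < m \<Longrightarrow> x*m + y < n*m"
proof -
  assume "x < n" "y < m"
  then have "x*m + y < (x+1)*m" by simp
  also have "\<dots> \<le> n*m" using \<open>x<n\<close> by (intro mult_le_mono1) simp
  finally show ?thesis .
qed

lemma supp_chain:
  assumes "0 < d" "0 < p" "sp b (r*q) (d*p) i k" "sp (r*p) c d k j"
  shows "sp (b*p) (q*c) d i j"
proof -
  have e1: "i div (b*(d*p)) = k div (r*q*(d*p))" "i mod (d*p) = k mod (d*p)"
    using assms(3) by (auto simp: sp_def)
  have e2: "k div (r*p*d) = j div (c*d)" "k mod d = j mod d" using assms(4) by (auto simp: sp_def)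
  have "i mod d = i mod (d*p) mod d" by (simp add: mod_mod_cancel)
  also have "\<dots> = k mod (d*p) mod d" using e1 by simp
  also have "\<dots> = k mod d" by (simp add: mod_mod_cancel)
  finally have m: "i mod d = j mod d" using e2 by simp
  have "i div (b*p*d) = i div (b*(d*p))" by (simp add: ac_simps)
  also have "\<dots> = k div (r*q*(d*p))" using e1 by simp
  also have "\<dots> = k div (r*p*d) div q" by (metis div_mult2_eq mult.commute mult.left_commute)
  also have "\<dots> = j div (c*d) div q" using e2 by simp
  also have "\<dots> = j div (q*c*d)" by (metis div_mult2_eq mult.commute mult.left_commute)
  finally show ?thesis using m by (simp add: sp_def)
qed

lemma part1:
  assumes "0 < d" "0 < p" "X \<in> factors (a,b,r*q,d*p)" "Y \<in> factors (a*q,r*p,c,d)"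
  shows "X * Y \<in> factors (a,b*p,q*c,d)"
proof -
  have dim: "a*q*(r*p)*d = a*(r*q)*(d*p)" by (simp add: ac_simps)
  have X: "X \<in> carrier_mat (a*b*(d*p)) (a*(r*q)*(d*p))"
    and Xz: "\<And>i k. i < a*b*(d*p) \<Longrightarrow> k < a*(r*q)*(d*p) \<Longrightarrow> \<not> sp b (r*q) (d*p) i k \<Longrightarrow> X $$ (i,k) = 0"
    using assms(3) by (auto simp: factors_iff)
  have Y: "Y \<in> carrier_mat (a*(r*q)*(d*p)) (a*q*c*d)"
    and Yz: "\<And>k j. k < a*(r*q)*(d*p) \<Longrightarrow> j < a*q*c*d \<Longrightarrow> \<not> sp (r*p) c d k j \<Longrightarrow> Y $$ (k,j) = 0"
    using assms(4) by (auto simp: factors_iff dim)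
  have XY: "X * Y \<in> carrier_mat (a*(b*p)*d) (a*(q*c)*d)"
    using X Y by (auto simp: ac_simps)
  show ?thesis unfolding factors_iff
  proof (intro CollectI conjI allI impI XY)
    fix i j assume i: "i < a*(b*p)*d" and j: "j < a*(q*c)*d" and ns: "\<not> sp (b*p) (q*c) d i j"
    have i': "i < a*b*(d*p)" using i by (simp add: ac_simps)
    have j': "j < a*q*c*d" using j by (simp add: ac_simps)
    have "(X*Y) $$ (i,j) = (\<Sum>k<a*(r*q)*(d*p). X $$ (i,k) * Y $$ (k,j))"
      using mult_entry[OF X Y i' j'] .
    also have "\<dots> = 0"
    proof (rule sum.neutral, intro ballI)
      fix k assume "k \<in> {..<a*(r*q)*(d*p)}"
      then have k: "k < a*(r*q)*(d*p)" by simp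
      show "X $$ (i,k) * Y $$ (k,j) = 0"
      proof (cases "sp b (r*q) (d*p) i k")
        case True
        then have "\<not> sp (r*p) c d k j" using supp_chain[OF assms(1,2)] ns by blast
        then show ?thesis using Yz[OF k j'] by simp
      next
        case False
        then show ?thesis using Xz[OF i' k] by simp
      qed
    qed
    finally show "(X*Y) $$ (i,j) = 0" .
  qed
qed

lemma mod_m_d: "m = d*(p::nat) \<Longrightarrow> x mod m mod d = x mod d"
  by (simp add: mod_mod_cancel)

lemma part2b:
  assumes pos: "0 < d" "0 < p" "0 < q" "0 < r" "0 < b" and m: "m = d*p" and br: "b \<le> r"
    and Z: "Z \<in> factors (a,b*p,q*c,d)"
  shows "\<exists>X Y. Z = X*Y \<and> X \<in> factors (a,b,r*q,m) \<and> Y \<in> factors (a*q,r*p,c,d)"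
proof -
  have m0: "0 < m" using pos m by simp
  have Zc: "Z \<in> carrier_mat (a*b*m) (a*q*c*d)" using Z m by (auto simp: factors_iff ac_simps)
  have Zz: "\<And>i j. i < a*b*m \<Longrightarrow> j < a*q*c*d \<Longrightarrow> \<not> sp (b*p) (q*c) d i j \<Longrightarrow> Z $$ (i,j) = 0"
    using Z m by (auto simp: factors_iff ac_simps)
  define X where "X = mat (a*b*m) (a*(r*q)*m) (\<lambda>(i,k).
     if i div (b*m) = k div (r*m) div q \<and> i mod m = k mod m \<and> k div m mod r = i div m mod b
     then (1::complex) else 0)"
  define Y where "Y = mat (a*(r*q)*m) (a*q*c*d) (\<lambda>(k,j).
     if k div (r*m) = j div (c*d) \<and> k mod d = j mod d \<and> k div m mod r < b
     then Z $$ (((k div (r*m) div q)*b + k div m mod r)*m + k mod m, j) else 0)"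
  have Xc: "X \<in> carrier_mat (a*b*m) (a*(r*q)*m)" by (simp add: X_def)
  have Yc: "Y \<in> carrier_mat (a*(r*q)*m) (a*q*c*d)" by (simp add: Y_def)
  have dq: "\<And>k. k div (r*m) div q = k div (r*q*m)" by (metis div_mult2_eq mult.commute mult.left_commute)
  have dq2: "\<And>j. j div (c*d) div q = j div (q*c*d)" by (metis div_mult2_eq mult.commute mult.left_commute)
  have Xf: "X \<in> factors (a,b,r*q,m)"
    unfolding factors_iff using Xc by (auto simp: X_def sp_def dq)
  have rpd: "r*p*d = r*m" using m by (simp add: ac_simps)
  have Yf: "Y \<in> factors (a*q,r*p,c,d)"
  proof -
    have dimY: "a*q*(r*p)*d = a*(r*q)*m" using m by (simp add: ac_simps)
    show ?thesis unfolding factors_iff dimY sp_def rpd using Yc by (auto simp: Y_def)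
  qed
  have prod: "Z = X * Y"
  proof (rule eq_matI)
    show "dim_row Z = dim_row (X*Y)" "dim_col Z = dim_col (X*Y)" using Xc Yc Zc by auto
    fix i j assume "i < dim_row (X*Y)" "j < dim_col (X*Y)"
    then have i: "i < a*b*m" and j: "j < a*q*c*d" using Xc Yc by auto
    define I1 where "I1 = i div (b*m)"
    define I2 where "I2 = i div m mod b"
    define I3 where "I3 = i mod m"
    define J1 where "J1 = j div (c*d)"
    define k0 where "k0 = (J1*r + I2)*m + I3"
    define S where "S = sp (b*p) (q*c) d i j"
    have I2b: "I2 < b" using pos by (simp add: I2_def)
    have I3m: "I3 < m" using m0 by (simp add: I3_def)
    have irec: "i = (I1*b + I2)*m + I3" unfolding I1_def I2_def I3_def by (rule recon)
    have k0d: "k0 div (r*m) = J1" "k0 div m mod r = I2" "k0 mod m = I3"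
      using dig[of I2 r I3 m J1] I2b br I3m by (auto simp: k0_def)
    have S_iff: "S \<longleftrightarrow> I1 = J1 div q \<and> i mod d = j mod d"
      unfolding S_def sp_def I1_def J1_def dq2 using m by (simp add: ac_simps)
    have J1lt: "J1 < a*q" unfolding J1_def using j
      by (simp add: less_mult_imp_div_less mult.assoc)
    have "J1*r + I2 < a*q*r" using lt2[OF J1lt] I2b br by simp
    then have "k0 < a*q*r*m" unfolding k0_def using lt2 I3m by blast
    then have k0lt: "k0 < a*(r*q)*m" by (simp add: ac_simps)
    have termk: "X $$ (i,k) * Y $$ (k,j) = (if k = k0 \<and> S then Z $$ (i,j) else 0)"
      if k: "k < a*(r*q)*m" for k
    proof (cases "k = k0 \<and> S")
      case True
      then have kk: "k = k0" and S: "S" by auto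
      have "k0 mod d = j mod d" using S_iff S k0d(3) mod_m_d[OF m] I3_def by metis
      then have "Y $$ (k,j) = Z $$ (((J1 div q)*b + I2)*m + I3, j)"
        using k j k0d I2b kk by (simp add: Y_def J1_def)
      also have "\<dots> = Z $$ (i,j)" using S_iff S irec by simp
      finally have Yv: "Y $$ (k,j) = Z $$ (i,j)" .
      have "X $$ (i,k) = 1" using i k kk k0d S_iff S
        by (simp add: X_def I1_def I2_def I3_def)
      then show ?thesis using Yv True by simp
    next
      case False
      have "X $$ (i,k) * Y $$ (k,j) = 0"
      proof (rule ccontr)
        assume nz: "X $$ (i,k) * Y $$ (k,j) \<noteq> 0"
        then have xn: "X $$ (i,k) \<noteq> 0" and yn: "Y $$ (k,j) \<noteq> 0" by auto
        have c1: "I1 = k div (r*m) div q" "I3 = k mod m" "k div m mod r = I2"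
          using xn i k by (auto simp: X_def I1_def I2_def I3_def split: if_splits)
        have c2: "k div (r*m) = J1" "k mod d = j mod d"
          using yn k j by (auto simp: Y_def J1_def split: if_splits)
        have "k = (k div (r*m)*r + k div m mod r)*m + k mod m" by (rule recon)
        then have "k = k0" using c1 c2 by (simp add: k0_def)
        moreover have "S" using S_iff c1 c2 mod_m_d[OF m] I3_def by metis
        ultimately show False using False by simp
      qed
      then show ?thesis using False by (simp only: if_False)
    qed
    have "(X*Y) $$ (i,j) = (\<Sum>k<a*(r*q)*m. X $$ (i,k) * Y $$ (k,j))"
      using mult_entry[OF Xc Yc i j] .
    also have "\<dots> = (\<Sum>k<a*(r*q)*m. if k = k0 \<and> S then Z $$ (i,j) else 0)"
      using termk by (intro sum.cong) auto
    also have "\<dots> = (if S then Z $$ (i,j) else 0)" using k0lt by (auto simp: sum.delta)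
    also have "\<dots> = Z $$ (i,j)" using Zz[OF i j] S_def by auto
    finally show "Z $$ (i,j) = (X*Y) $$ (i,j)" by simp
  qed
  show ?thesis using prod Xf Yf by blast
qed

lemma part2c:
  assumes pos: "0 < d" "0 < p" "0 < q" "0 < r" "0 < c" and m: "m = d*p" and cr: "c \<le> r"
    and Z: "Z \<in> factors (a,b*p,q*c,d)"
  shows "\<exists>X Y. Z = X*Y \<and> X \<in> factors (a,b,r*q,m) \<and> Y \<in> factors (a*q,r*p,c,d)"
proof -
  have m0: "0 < m" using pos m by simp
  have Zc: "Z \<in> carrier_mat (a*b*m) (a*q*c*d)" using Z m by (auto simp: factors_iff ac_simps)
  have Zz: "\<And>i j. i < a*b*m \<Longrightarrow> j < a*q*c*d \<Longrightarrow> \<not> sp (b*p) (q*c) d i j \<Longrightarrow> Z $$ (i,j) = 0"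
    using Z m by (auto simp: factors_iff ac_simps)
  define X where "X = mat (a*b*m) (a*(r*q)*m) (\<lambda>(i,k).
     if i div (b*m) = k div (r*m) div q \<and> i mod m = k mod m \<and> k div m mod r < c
     then Z $$ (i, (k div (r*m) * c + k div m mod r)*d + k mod d) else 0)"
  define Y where "Y = mat (a*(r*q)*m) (a*q*c*d) (\<lambda>(k,j).
     if k div (r*m) = j div (c*d) \<and> k mod d = j mod d \<and> k div m mod r = j div d mod c
     then (1::complex) else 0)"
  have Xc: "X \<in> carrier_mat (a*b*m) (a*(r*q)*m)" by (simp add: X_def)
  have Yc: "Y \<in> carrier_mat (a*(r*q)*m) (a*q*c*d)" by (simp add: Y_def)
  have dq: "\<And>k. k div (r*m) div q = k div (r*q*m)" by (metis div_mult2_eq mult.commute mult.left_commute)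
  have dq2: "\<And>j. j div (c*d) div q = j div (q*c*d)" by (metis div_mult2_eq mult.commute mult.left_commute)
  have Xf: "X \<in> factors (a,b,r*q,m)"
    unfolding factors_iff using Xc by (auto simp: X_def sp_def dq)
  have rpd: "r*p*d = r*m" using m by (simp add: ac_simps)
  have Yf: "Y \<in> factors (a*q,r*p,c,d)"
  proof -
    have dimY: "a*q*(r*p)*d = a*(r*q)*m" using m by (simp add: ac_simps)
    show ?thesis unfolding factors_iff dimY sp_def rpd using Yc by (auto simp: Y_def)
  qed
  have prod: "Z = X * Y"
  proof (rule eq_matI)
    show "dim_row Z = dim_row (X*Y)" "dim_col Z = dim_col (X*Y)" using Xc Yc Zc by auto
    fix i j assume "i < dim_row (X*Y)" "j < dim_col (X*Y)"
    then have i: "i < a*b*m" and j: "j < a*q*c*d" using Xc Yc by auto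
    define I1 where "I1 = i div (b*m)"
    define I3 where "I3 = i mod m"
    define J1 where "J1 = j div (c*d)"
    define J2 where "J2 = j div d mod c"
    define J3 where "J3 = j mod d"
    define k0 where "k0 = (J1*r + J2)*m + I3"
    define S where "S = sp (b*p) (q*c) d i j"
    have J2c: "J2 < c" using pos by (simp add: J2_def)
    have I3m: "I3 < m" using m0 by (simp add: I3_def)
    have jrec: "j = (J1*c + J2)*d + J3" unfolding J1_def J2_def J3_def by (rule recon)
    have k0d: "k0 div (r*m) = J1" "k0 div m mod r = J2" "k0 mod m = I3"
      using dig[of J2 r I3 m J1] J2c cr I3m by (auto simp: k0_def)
    have S_iff: "S \<longleftrightarrow> I1 = J1 div q \<and> i mod d = j mod d"
      unfolding S_def sp_def I1_def J1_def dq2 using m by (simp add: ac_simps)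
    have J1lt: "J1 < a*q" unfolding J1_def using j
      by (simp add: less_mult_imp_div_less mult.assoc)
    have "J1*r + J2 < a*q*r" using lt2[OF J1lt] J2c cr by simp
    then have "k0 < a*q*r*m" unfolding k0_def using lt2 I3m by blast
    then have k0lt: "k0 < a*(r*q)*m" by (simp add: ac_simps)
    have termk: "X $$ (i,k) * Y $$ (k,j) = (if k = k0 \<and> S then Z $$ (i,j) else 0)"
      if k: "k < a*(r*q)*m" for k
    proof (cases "k = k0 \<and> S")
      case True
      then have kk: "k = k0" and S: "S" by auto
      have k0m: "k0 mod d = j mod d" using S_iff S k0d(3) mod_m_d[OF m] I3_def by metis
      then have "X $$ (i,k) = Z $$ (i, (J1*c + J2)*d + J3)"
        using i k k0d J2c kk S_iff S by (simp add: X_def I1_def I3_def J3_def)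
      also have "\<dots> = Z $$ (i,j)" using jrec by simp
      finally have Xv: "X $$ (i,k) = Z $$ (i,j)" .
      have "Y $$ (k,j) = 1" using j k kk k0d k0m
        by (simp add: Y_def J1_def J2_def)
      then show ?thesis using Xv True by simp
    next
      case False
      have "X $$ (i,k) * Y $$ (k,j) = 0"
      proof (rule ccontr)
        assume nz: "X $$ (i,k) * Y $$ (k,j) \<noteq> 0"
        then have xn: "X $$ (i,k) \<noteq> 0" and yn: "Y $$ (k,j) \<noteq> 0" by auto
        have c1: "I1 = k div (r*m) div q" "I3 = k mod m"
          using xn i k by (auto simp: X_def I1_def I3_def split: if_splits)
        have c2: "k div (r*m) = J1" "k mod d = j mod d" "k div m mod r = J2"
          using yn k j by (auto simp: Y_def J1_def J2_def split: if_splits)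
        have "k = (k div (r*m)*r + k div m mod r)*m + k mod m" by (rule recon)
        then have "k = k0" using c1 c2 by (simp add: k0_def)
        moreover have "S" using S_iff c1 c2 mod_m_d[OF m] I3_def by metis
        ultimately show False using False by simp
      qed
      then show ?thesis using False by (simp only: if_False)
    qed
    have "(X*Y) $$ (i,j) = (\<Sum>k<a*(r*q)*m. X $$ (i,k) * Y $$ (k,j))"
      using mult_entry[OF Xc Yc i j] .
    also have "\<dots> = (\<Sum>k<a*(r*q)*m. if k = k0 \<and> S then Z $$ (i,j) else 0)"
      using termk by (intro sum.cong) auto
    also have "\<dots> = (if S then Z $$ (i,j) else 0)" using k0lt by (auto simp: sum.delta)
    also have "\<dots> = Z $$ (i,j)" using Zz[OF i j] S_def by auto
    finally show "Z $$ (i,j) = (X*Y) $$ (i,j)" by simp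
  qed
  show ?thesis using prod Xf Yf by blast
qed

lemma norm_ineq:
  assumes "0 < (a::nat)" "0 < b" "0 < c" "0 < d" "0 < p" "0 < q" "0 < r" "min b c \<le> r"
  shows "a*(b*p)*(q*c)*d < a*b*(r*q)*(d*p) + a*q*(r*p)*c*d"
proof -
  have bc: "b*c < b*r + r*c"
  proof (cases "b \<le> r")
    case True
    then have "b*c \<le> r*c" by simp
    moreover have "0 < b*r" using assms by simp
    ultimately show ?thesis by linarith
  next
    case False
    then have "c \<le> r" using assms(8) by simp
    then have "b*c \<le> b*r" by simp
    moreover have "0 < r*c" using assms by simp
    ultimately show ?thesis by linarith
  qed
  have K: "0 < a*p*q*d" using assms by simp
  have "a*(b*p)*(q*c)*d = (a*p*q*d)*(b*c)" by (simp add: ac_simps)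
  also have "\<dots> < (a*p*q*d)*(b*r + r*c)" using K bc by simp
  also have "\<dots> = a*b*(r*q)*(d*p) + a*q*(r*p)*c*d" by (simp add: algebra_simps)
  finally show ?thesis .
qed

theorem lemma4p14:
  fixes \<pi>1 \<pi>2 :: pattern
  assumes "pat_pos \<pi>1" and "pat_pos \<pi>2"
    and "chainable \<pi>1 \<pi>2"
    and "redundant \<pi>1 \<pi>2"
  shows "arch_set [\<pi>1, \<pi>2] = factors (\<pi>1 \<star> \<pi>2) \<and> factors (\<pi>1 \<star> \<pi>2) = arch_set [\<pi>1 \<star> \<pi>2]
         \<and> arch_norm0 [\<pi>1 \<star> \<pi>2] = pat_norm0 (\<pi>1 \<star> \<pi>2)
         \<and> pat_norm0 (\<pi>1 \<star> \<pi>2) < pat_norm0 \<pi>1 + pat_norm0 \<pi>2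
         \<and> pat_norm0 \<pi>1 + pat_norm0 \<pi>2 = arch_norm0 [\<pi>1, \<pi>2]"
proof -
  obtain a1 b1 c1 d1 where p1: "\<pi>1 = (a1,b1,c1,d1)" by (metis prod_cases4)
  obtain a2 b2 c2 d2 where p2: "\<pi>2 = (a2,b2,c2,d2)" by (metis prod_cases4)
  have pos: "0 < a1" "0 < b1" "0 < c1" "0 < d1" "0 < a2" "0 < b2" "0 < c2" "0 < d2"
    using assms(1,2) by (auto simp: p1 p2 pat_pos_def)
  have ch: "real (a1*c1) / real a2 = real (b2*d2) / real d1" "a2 dvd a1*c1" "a1 dvd a2" "d2 dvd d1"
    using assms(3) by (auto simp: p1 p2 chainable_def)
  define q where "q = a2 div a1"
  define p where "p = d1 div d2"
  define r where "r = a1*c1 div a2"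
  have a2q: "a2 = a1*q" using ch(3) by (simp add: q_def)
  have d1p: "d1 = d2*p" using ch(4) by (simp add: p_def)
  have ac1: "a1*c1 = r*a2" using ch(2) by (simp add: r_def)
  have c1r: "c1 = r*q" using ac1 a2q pos(1) by (simp add: ac_simps)
  have "real (b2*d2) = real r * real d1"
  proof -
    have "real (a1*c1) / real a2 = real r" using ac1 pos(5) by simp
    then show ?thesis using ch(1) pos(4) by (simp add: field_simps)
  qed
  then have "b2*d2 = r*d1" by (metis of_nat_mult of_nat_eq_iff)
  then have b2r: "b2 = r*p" using d1p pos(8) by (simp add: ac_simps)
  have qp: "0 < q" "0 < p" "0 < r" using pos a2q d1p c1r by auto
  have red: "min b1 c2 \<le> r" using assms(4) by (simp add: redundant_def chain_r_def p1 p2 r_def)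
  have P1: "\<pi>1 = (a1,b1,r*q,d2*p)" using p1 c1r d1p by simp
  have P2: "\<pi>2 = (a1*q,r*p,c2,d2)" using p2 a2q b2r by simp
  have ST: "\<pi>1 \<star> \<pi>2 = (a1,b1*p,q*c2,d2)" using pos qp
    by (simp add: P1 P2 pat_star_def ac_simps)
  have A: "arch_set [\<pi>1, \<pi>2] = factors (\<pi>1 \<star> \<pi>2)"
  proof
    show "arch_set [\<pi>1, \<pi>2] \<subseteq> factors (\<pi>1 \<star> \<pi>2)"
      unfolding ST using part1[of d2 p _ a1 b1 r q _ c2] pos qp by (auto simp: P1 P2)
  next
    show "factors (\<pi>1 \<star> \<pi>2) \<subseteq> arch_set [\<pi>1, \<pi>2]"
    proof
      fix Z assume Z: "Z \<in> factors (\<pi>1 \<star> \<pi>2)"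
      have "\<exists>X Y. Z = X*Y \<and> X \<in> factors (a1,b1,r*q,d2*p) \<and> Y \<in> factors (a1*q,r*p,c2,d2)"
      proof (cases "b1 \<le> r")
        case True
        then show ?thesis using part2b[of d2 p q r b1 "d2*p" Z a1 c2] Z pos qp by (simp add: ST)
      next
        case False
        then have "c2 \<le> r" using red by simp
        then show ?thesis using part2c[of d2 p q r c2 "d2*p" Z a1 b1] Z pos qp by (simp add: ST)
      qed
      then show "Z \<in> arch_set [\<pi>1, \<pi>2]" by (auto simp: P1 P2)
    qed
  qed
  have N: "pat_norm0 (\<pi>1 \<star> \<pi>2) < pat_norm0 \<pi>1 + pat_norm0 \<pi>2"
    unfolding ST using norm_ineq[of a1 b1 c2 d2 p q r] pos qp red by (simp add: P1 P2 pat_norm0_def)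
  show ?thesis using A N by (simp add: arch_norm0_def)
qed

end
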